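(* Let $M$ be a connected split matroid of rank $k$ on $E=[n]$, and let $F$ and $G$ be two distinct proper cyclic flats of $M$ of ranks $r$ and $s$. Set $Q=\Delta_{k,n}\cap H^+(F,r)\cap H^+(G,s)$, $\alpha=|F\setminus G|$, $\beta=|G\setminus F|$, $\gamma=|F\cap G|$. If $F$ and $G$ form a modular pair, then \[ Q=\Delta_{\gamma,F\cap G}\times\Delta_{r-\gamma,F\setminus G}\times\Delta_{s-\gamma,G\setminus F}\times\Delta_{0,E\setminus(F\cup G)}\cong\Delta_{r-\gamma,\alpha}\times\Delta_{s-\gamma,\beta}, \] and $Q$ coincides with $\Delta_{k,n}\cap H(F,r)\cap H(G,s)$. Otherwise, $Q$ is empty.
   Context: For $A\subseteq E$ and $r\in\mathbb R$, $H^+(A,r)=\{x\in\mathbb R^E:\sum_{i\in A}x_i\ge r\}$, $H^-(A,r)=\{x:\sum_{i\in A}x_i\le r\}$ and $H(A,r)=H^+(A,r)\cap H^-(A,r)$. For a finite set $S$, $\Delta_{m,S}\subset\mathbb R^S$ is the convex hull of indicator vectors of $m$-subsets of $S$ and $\Delta_{m,N}=\Delta_{m,[N]}$; products over disjoint sets partitioning $E$ are regarded as subsets of $\mathbb R^E$. A cyclic flat is a flat that is a union of circuits; $(F,G)$ is a modular pair if $\mathrm{rk}F+\mathrm{rk}G=\mathrm{rk}(F\cup G)+\mathrm{rk}(F\cap G)$. A subset $A$ is stressed if $M|A$ and $M/A$ are uniform; its cover is the set of $k$-subsets $B$ with $|B\cap A|\ge \mathrm{rk}(A)+1$; relaxing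 $A$ means adding its cover to the set of bases. A connected matroid is split if relaxing all stressed subsets with nonempty cover yields a uniform matroid. *)

theory Defs
  imports Main "HOL-Library.Indicator_Function"
begin

definition matroid :: "'a set \<Rightarrow> 'a set set \<Rightarrow> bool" where
  "matroid E \<B> \<longleftrightarrow> finite E \<and> \<B> \<noteq> {} \<and> (\<forall>X\<in>\<B>. X \<subseteq> E) \<and>
     (\<forall>X\<in>\<B>. \<forall>Y\<in>\<B>. \<forall>x\<in>X - Y. \<exists>y\<in>Y - X. insert y (X - {x}) \<in> \<B>)"

definition indep :: "'a set set \<Rightarrow> 'a set \<Rightarrow> bool" where
  "indep \<B> I \<longleftrightarrow> (\<exists>X\<in>\<B>. I \<subseteq> X)"

definition rk :: "'a set set \<Rightarrow> 'a set \<Rightarrow> nat" where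
  "rk \<B> A = Max ((\<lambda>X. card (A \<inter> X)) ` \<B>)"

definition circuit :: "'a set \<Rightarrow> 'a set set \<Rightarrow> 'a set \<Rightarrow> bool" where
  "circuit E \<B> C \<longleftrightarrow> C \<subseteq> E \<and> \<not> indep \<B> C \<and> (\<forall>D. D \<subset> C \<longrightarrow> indep \<B> D)"

definition flat :: "'a set \<Rightarrow> 'a set set \<Rightarrow> 'a set \<Rightarrow> bool" where
  "flat E \<B> F \<longleftrightarrow> F \<subseteq> E \<and> (\<forall>e\<in>E - F. rk \<B> (insert e F) > rk \<B> F)"

definition cyclic_flat :: "'a set \<Rightarrow> 'a set set \<Rightarrow> 'a set \<Rightarrow> bool" where
  "cyclic_flat E \<B> F \<longleftrightarrow> flat E \<B> F \<and> F = \<Union>{C. circuit E \<B> C \<and> C \<subseteq> F}"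

definition proper_cyclic_flat :: "'a set \<Rightarrow> 'a set set \<Rightarrow> 'a set \<Rightarrow> bool" where
  "proper_cyclic_flat E \<B> F \<longleftrightarrow> cyclic_flat E \<B> F \<and> F \<noteq> {} \<and> F \<noteq> E"

definition connected_matroid :: "'a set \<Rightarrow> 'a set set \<Rightarrow> bool" where
  "connected_matroid E \<B> \<longleftrightarrow> matroid E \<B> \<and>
     (\<forall>e\<in>E. \<forall>f\<in>E. e \<noteq> f \<longrightarrow> (\<exists>C. circuit E \<B> C \<and> e \<in> C \<and> f \<in> C))"

definition modular_pair :: "'a set set \<Rightarrow> 'a set \<Rightarrow> 'a set \<Rightarrow> bool" where
  "modular_pair \<B> F G \<longleftrightarrow> rk \<B> F + rk \<B> G = rk \<B> (F \<union> G) + rk \<B> (F \<inter> G)"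

text \<open>Bases of the restriction M|A (ground set A) and of the contraction M/A (ground set E - A).\<close>
definition restr_bases :: "'a set set \<Rightarrow> 'a set \<Rightarrow> 'a set set" where
  "restr_bases \<B> A = {X. X \<subseteq> A \<and> indep \<B> X \<and> card X = rk \<B> A}"

definition contr_bases :: "'a set \<Rightarrow> 'a set set \<Rightarrow> 'a set \<Rightarrow> 'a set set" where
  "contr_bases E \<B> A = {X. X \<subseteq> E - A \<and> (\<exists>I\<in>restr_bases \<B> A. X \<union> I \<in> \<B>)}"

definition uniform_on :: "'a set \<Rightarrow> 'a set set \<Rightarrow> bool" where
  "uniform_on S Bs \<longleftrightarrow> (\<exists>m. Bs = {X. X \<subseteq> S \<and> card X = m})"

definition stressed :: "'a set \<Rightarrow> 'a set set \<Rightarrow> 'a set \<Rightarrow> bool" where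
  "stressed E \<B> A \<longleftrightarrow> A \<subseteq> E \<and> uniform_on A (restr_bases \<B> A) \<and> uniform_on (E - A) (contr_bases E \<B> A)"

definition cover :: "'a set \<Rightarrow> 'a set set \<Rightarrow> 'a set \<Rightarrow> 'a set set" where
  "cover E \<B> A = {X. X \<subseteq> E \<and> card X = rk \<B> E \<and> card (X \<inter> A) \<ge> rk \<B> A + 1}"

definition relax_all :: "'a set \<Rightarrow> 'a set set \<Rightarrow> 'a set set" where
  "relax_all E \<B> = \<B> \<union> \<Union>{cover E \<B> A | A. stressed E \<B> A \<and> cover E \<B> A \<noteq> {}}"

definition split_matroid :: "'a set \<Rightarrow> 'a set set \<Rightarrow> bool" where
  "split_matroid E \<B> \<longleftrightarrow> connected_matroid E \<B> \<and> uniform_on E (relax_all E \<B>)"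

text \<open>Points of R^S are functions 'a => real vanishing outside S.
  hypersimplex m S = convex hull of indicator vectors of m-subsets of S (finite S),
  written out as the set of convex combinations of these finitely many vectors.\<close>
definition hypersimplex :: "int \<Rightarrow> 'a set \<Rightarrow> ('a \<Rightarrow> real) set" where
  "hypersimplex m S =
     {x. \<exists>c :: 'a set \<Rightarrow> real. (\<forall>B. c B \<ge> 0) \<and>
          (\<Sum>B\<in>{B. B \<subseteq> S \<and> int (card B) = m}. c B) = 1 \<and>
          x = (\<lambda>i. \<Sum>B\<in>{B. B \<subseteq> S \<and> int (card B) = m}. c B * indicator B i)}"

definition Hge :: "'a set \<Rightarrow> real \<Rightarrow> ('a \<Rightarrow> real) set" where
  "Hge A r = {x. (\<Sum>i\<in>A. x i) \<ge> r}"

definition Hle :: "'a set \<Rightarrow> real \<Rightarrow> ('a \<Rightarrow> real) set" where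
  "Hle A r = {x. (\<Sum>i\<in>A. x i) \<le> r}"

definition Heq :: "'a set \<Rightarrow> real \<Rightarrow> ('a \<Rightarrow> real) set" where
  "Heq A r = Hge A r \<inter> Hle A r"

definition restr :: "'a set \<Rightarrow> ('a \<Rightarrow> real) \<Rightarrow> ('a \<Rightarrow> real)" where
  "restr S x = (\<lambda>i. if i \<in> S then x i else 0)"

text \<open>Product of hypersimplices Delta_{m_j,S_j} over disjoint sets S_j, as a subset of R^(union S_j).\<close>
definition simplex_product :: "(int \<times> 'a set) list \<Rightarrow> ('a \<Rightarrow> real) set" where
  "simplex_product ps =
     {x. (\<forall>i. i \<notin> (\<Union>p\<in>set ps. snd p) \<longrightarrow> x i = 0) \<and>
         (\<forall>p\<in>set ps. restr (snd p) x \<in> hypersimplex (fst p) (snd p))}"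

end

theory Submission
  imports Defs
begin

lemma hyp_easy:
  assumes "finite S" "x \<in> hypersimplex m S"
  shows "(\<forall>i. i \<notin> S \<longrightarrow> x i = 0) \<and> (\<forall>i\<in>S. 0 \<le> x i \<and> x i \<le> 1) \<and> (\<Sum>i\<in>S. x i) = of_int m"
proof -
  let ?K = "{B. B \<subseteq> S \<and> int (card B) = m}"
  have finK: "finite ?K" by (rule finite_subset[of _ "Pow S"]) (auto simp: assms(1))
  obtain c where c0: "\<forall>B. c B \<ge> 0" and c1: "(\<Sum>B\<in>?K. c B) = 1"
    and x: "x = (\<lambda>i. \<Sum>B\<in>?K. c B * indicator B i)"
    using assms(2) unfolding hypersimplex_def by blast
  have A: "\<forall>i. i \<notin> S \<longrightarrow> x i = 0"
  proof (intro allI impI)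
    fix i assume "i \<notin> S"
    then have "\<forall>B\<in>?K. c B * indicator B i = (0::real)" by (auto simp: indicator_def)
    then show "x i = 0" unfolding x by (simp add: sum.neutral)
  qed
  have B: "\<forall>i\<in>S. 0 \<le> x i \<and> x i \<le> 1"
  proof
    fix i assume "i \<in> S"
    have "0 \<le> x i" unfolding x using c0 by (auto intro!: sum_nonneg simp: indicator_def)
    moreover have "x i \<le> (\<Sum>B\<in>?K. c B)" unfolding x
      using c0 by (intro sum_mono) (auto simp: indicator_def)
    ultimately show "0 \<le> x i \<and> x i \<le> 1" using c1 by simp
  qed
  have "(\<Sum>i\<in>S. x i) = (\<Sum>B\<in>?K. \<Sum>i\<in>S. c B * indicator B i)"
    unfolding x by (rule sum.swap)
  also have "\<dots> = (\<Sum>B\<in>?K. c B * real (card B))"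
  proof (rule sum.cong[OF refl])
    fix B assume "B \<in> ?K"
    then have "B \<subseteq> S" by auto
    have "(\<Sum>i\<in>S. c B * indicator B i) = c B * (\<Sum>i\<in>S. indicator B i)"
      by (simp add: sum_distrib_left)
    also have "(\<Sum>i\<in>S. indicator B i :: real) = real (card (S \<inter> B))"
      by (simp add: indicator_def sum.If_cases assms(1) Int_def)
    also have "S \<inter> B = B" using \<open>B \<subseteq> S\<close> by auto
    finally show "(\<Sum>i\<in>S. c B * indicator B i) = c B * real (card B)" .
  qed
  also have "\<dots> = (\<Sum>B\<in>?K. c B * of_int m)"
    by (rule sum.cong[OF refl]) (auto)
  also have "\<dots> = of_int m" using c1 by (simp add: sum_distrib_right[symmetric])
  finally show ?thesis using A B by simp
qed

lemma hyp_convex: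
  assumes "x \<in> hypersimplex m S" "y \<in> hypersimplex m S" "0 \<le> t" "t \<le> 1"
  shows "(\<lambda>i. t * x i + (1 - t) * y i) \<in> hypersimplex m S"
proof -
  let ?K = "{B. B \<subseteq> S \<and> int (card B) = m}"
  obtain c where c0: "\<forall>B. c B \<ge> 0" and c1: "(\<Sum>B\<in>?K. c B) = 1"
    and x: "x = (\<lambda>i. \<Sum>B\<in>?K. c B * indicator B i)"
    using assms(1) unfolding hypersimplex_def by blast
  obtain d where d0: "\<forall>B. d B \<ge> 0" and d1: "(\<Sum>B\<in>?K. d B) = 1"
    and y: "y = (\<lambda>i. \<Sum>B\<in>?K. d B * indicator B i)"
    using assms(2) unfolding hypersimplex_def by blast
  define e where "e = (\<lambda>B. t * c B + (1 - t) * d B)"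
  have "\<forall>B. e B \<ge> 0" using c0 d0 assms(3,4) unfolding e_def by (simp add: add_nonneg_nonneg)
  moreover have "(\<Sum>B\<in>?K. e B) = 1" unfolding e_def
    by (simp add: sum.distrib sum_distrib_left[symmetric] c1 d1)
  moreover have "(\<lambda>i. t * x i + (1 - t) * y i) = (\<lambda>i. \<Sum>B\<in>?K. e B * indicator B i)"
  proof (rule ext)
    fix i
    show "t * x i + (1 - t) * y i = (\<Sum>B\<in>?K. e B * indicator B i)"
      unfolding e_def x y by (simp add: distrib_right sum.distrib sum_distrib_left mult.assoc)
  qed
  ultimately show ?thesis unfolding hypersimplex_def by blast
qed

lemma hyp_vertex:
  assumes "finite S" "B \<subseteq> S" "int (card B) = m"
  shows "indicator B \<in> hypersimplex m S"
proof -
  let ?K = "{B. B \<subseteq> S \<and> int (card B) = m}"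
  have finK: "finite ?K" by (rule finite_subset[of _ "Pow S"]) (auto simp: assms(1))
  have BK: "B \<in> ?K" using assms by auto
  define c :: "'a set \<Rightarrow> real" where "c = (\<lambda>B'. if B' = B then 1 else 0)"
  have "\<forall>B. c B \<ge> 0" unfolding c_def by simp
  moreover have "(\<Sum>B\<in>?K. c B) = 1" unfolding c_def using finK BK by (simp add: sum.delta')
  moreover have "indicator B = (\<lambda>i. \<Sum>B\<in>?K. c B * indicator B i)"
  proof (rule ext)
    fix i
    have "(\<Sum>B'\<in>?K. c B' * indicator B' i) = (\<Sum>B'\<in>?K. if B' = B then indicator B i else 0)"
      unfolding c_def by (rule sum.cong) auto
    also have "\<dots> = indicator B i" using finK BK by (simp add: sum.delta')
    finally show "indicator B i = (\<Sum>B'\<in>?K. c B' * indicator B' i)" by simp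
  qed
  ultimately show ?thesis unfolding hypersimplex_def by blast
qed

lemma sum01:
  assumes "finite T" "\<forall>j\<in>T. x j = 0 \<or> x j = (1::real)"
  shows "(\<Sum>j\<in>T. x j) = real (card {j\<in>T. x j = 1})"
proof -
  have "(\<Sum>j\<in>T. x j) = (\<Sum>j\<in>T. if x j = 1 then 1 else 0)"
    using assms(2) by (intro sum.cong) auto
  also have "\<dots> = real (card {j\<in>T. x j = 1})"
    using assms(1) by (simp add: sum.If_cases Int_def)
  finally show ?thesis .
qed

lemma hyp_hard_aux:
  assumes finS: "finite S"
  shows "\<forall>x. card {i\<in>S. 0 < x i \<and> x i < 1} = N \<longrightarrow> (\<forall>i. i \<notin> S \<longrightarrow> x i = 0) \<longrightarrow>
     (\<forall>i\<in>S. 0 \<le> x i \<and> x i \<le> 1) \<longrightarrow> (\<Sum>i\<in>S. x i) = of_int m \<longrightarrow> x \<in> hypersimplex m S"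
proof (induction N rule: less_induct)
  case (less N)
  show ?case
  proof (intro allI impI)
    fix x :: "'a \<Rightarrow> real"
    assume cN: "card {i\<in>S. 0 < x i \<and> x i < 1} = N" and out: "\<forall>i. i \<notin> S \<longrightarrow> x i = 0"
      and box: "\<forall>i\<in>S. 0 \<le> x i \<and> x i \<le> 1" and sm: "(\<Sum>i\<in>S. x i) = of_int m"
    define Fr where "Fr = {i\<in>S. 0 < x i \<and> x i < 1}"
    have finFr: "finite Fr" unfolding Fr_def using finS by simp
    show "x \<in> hypersimplex m S"
    proof (cases "Fr = {}")
      case True
      define B where "B = {i\<in>S. x i = 1}"
      have 01: "\<forall>j\<in>S. x j = 0 \<or> x j = 1" using True box unfolding Fr_def by force
      have "x = indicator B"
      proof (rule ext)
        fix i show "x i = indicator B i"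
          using 01 out unfolding B_def indicator_def by (cases "i \<in> S") auto
      qed
      moreover have "int (card B) = m"
      proof -
        have "real (card B) = of_int m" using sum01[OF finS 01] sm unfolding B_def by simp
        then show ?thesis by (metis of_int_eq_iff of_int_of_nat_eq)
      qed
      ultimately show ?thesis using hyp_vertex[OF finS, of B m] unfolding B_def by auto
    next
      case False
      then obtain i where iF: "i \<in> Fr" by blast
      have "\<exists>j\<in>Fr. j \<noteq> i"
      proof (rule ccontr)
        assume "\<not> (\<exists>j\<in>Fr. j \<noteq> i)"
        then have FrI: "\<And>j. j \<in> Fr \<Longrightarrow> j = i" by blast
        have iS: "i \<in> S" using iF unfolding Fr_def by blast
        have 01: "\<forall>j\<in>S - {i}. x j = 0 \<or> x j = 1"
        proof
          fix j assume j: "j \<in> S - {i}"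
          then have "j \<notin> Fr" using FrI by blast
          then have "\<not> (0 < x j \<and> x j < 1)" using j unfolding Fr_def by blast
          moreover have "0 \<le> x j" "x j \<le> 1" using box j by auto
          ultimately show "x j = 0 \<or> x j = 1" by linarith
        qed
        have "(\<Sum>j\<in>S. x j) = x i + (\<Sum>j\<in>S - {i}. x j)"
          using finS iS by (simp add: sum.remove)
        then have "x i = of_int m - real (card {j\<in>S - {i}. x j = 1})"
          using sum01[of "S - {i}" x] finS 01 sm by simp
        then have "x i = of_int (m - int (card {j\<in>S - {i}. x j = 1}))" by simp
        then obtain z :: int where "x i = of_int z" by blast
        moreover have "0 < x i" "x i < 1" using iF unfolding Fr_def by auto
        ultimately have "0 < z" "z < 1" by simp_all
        then show False by simp
      qed
      then obtain j where jF: "j \<in> Fr" and ji: "j \<noteq> i" by blast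
      have iS: "i \<in> S" and xi: "0 < x i" "x i < 1" using iF unfolding Fr_def by auto
      have jS: "j \<in> S" and xj: "0 < x j" "x j < 1" using jF unfolding Fr_def by auto
      define d1 where "d1 = min (1 - x i) (x j)"
      define d2 where "d2 = min (x i) (1 - x j)"
      have d1p: "d1 > 0" and d2p: "d2 > 0" unfolding d1_def d2_def using xi xj by auto
      define v where "v = (\<lambda>l. (if l = i then 1 else 0) - (if l = j then (1::real) else 0))"
      define x1 where "x1 = (\<lambda>l. x l + d1 * v l)"
      define x2 where "x2 = (\<lambda>l. x l - d2 * v l)"
      have sv: "(\<Sum>l\<in>S. v l) = 0" unfolding v_def using finS iS jS by (simp add: sum_subtractf)
      have key: "\<And>y. (\<forall>l. l \<noteq> i \<and> l \<noteq> j \<longrightarrow> y l = x l) \<Longrightarrow> (\<forall>l. 0 \<le> y l \<and> y l \<le> 1 \<or> l \<notin> S) \<Longrightarrow>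
          (y i = 1 \<or> y j = 0 \<or> y i = 0 \<or> y j = 1) \<Longrightarrow> (\<Sum>l\<in>S. y l) = of_int m \<Longrightarrow> y \<in> hypersimplex m S"
      proof -
        fix y :: "'a \<Rightarrow> real"
        assume same: "\<forall>l. l \<noteq> i \<and> l \<noteq> j \<longrightarrow> y l = x l" and yb: "\<forall>l. 0 \<le> y l \<and> y l \<le> 1 \<or> l \<notin> S"
          and yint: "y i = 1 \<or> y j = 0 \<or> y i = 0 \<or> y j = 1" and ys: "(\<Sum>l\<in>S. y l) = of_int m"
        have sub: "{l\<in>S. 0 < y l \<and> y l < 1} \<subset> Fr"
        proof
          show "{l\<in>S. 0 < y l \<and> y l < 1} \<subseteq> Fr"
          proof
            fix l assume "l \<in> {l\<in>S. 0 < y l \<and> y l < 1}"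
            then show "l \<in> Fr" using same iF jF unfolding Fr_def by (cases "l = i \<or> l = j") auto
          qed
          show "{l\<in>S. 0 < y l \<and> y l < 1} \<noteq> Fr" using yint iF jF by auto
        qed
        have "card {l\<in>S. 0 < y l \<and> y l < 1} < N" using psubset_card_mono[OF finFr sub] cN Fr_def by simp
        moreover have "\<forall>l. l \<notin> S \<longrightarrow> y l = 0" using same out iS jS by metis
        moreover have "\<forall>l\<in>S. 0 \<le> y l \<and> y l \<le> 1" using yb by blast
        ultimately show "y \<in> hypersimplex m S" using less.IH ys by blast
      qed
      have x1h: "x1 \<in> hypersimplex m S"
      proof (rule key)
        show "\<forall>l. l \<noteq> i \<and> l \<noteq> j \<longrightarrow> x1 l = x l" unfolding x1_def v_def by simp
        show "\<forall>l. 0 \<le> x1 l \<and> x1 l \<le> 1 \<or> l \<notin> S"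
          unfolding x1_def v_def d1_def using box xi xj ji by auto
        show "x1 i = 1 \<or> x1 j = 0 \<or> x1 i = 0 \<or> x1 j = 1"
          unfolding x1_def v_def d1_def using ji by (auto simp: min_def)
        show "(\<Sum>l\<in>S. x1 l) = of_int m" unfolding x1_def
          by (simp add: sum.distrib sum_distrib_left[symmetric] sv sm)
      qed
      have x2h: "x2 \<in> hypersimplex m S"
      proof (rule key)
        show "\<forall>l. l \<noteq> i \<and> l \<noteq> j \<longrightarrow> x2 l = x l" unfolding x2_def v_def by simp
        show "\<forall>l. 0 \<le> x2 l \<and> x2 l \<le> 1 \<or> l \<notin> S"
          unfolding x2_def v_def d2_def using box xi xj ji by auto
        show "x2 i = 1 \<or> x2 j = 0 \<or> x2 i = 0 \<or> x2 j = 1"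
          unfolding x2_def v_def d2_def using ji by (auto simp: min_def)
        show "(\<Sum>l\<in>S. x2 l) = of_int m" unfolding x2_def
          by (simp add: sum_subtractf sum_distrib_left[symmetric] sv sm)
      qed
      define t where "t = d2 / (d1 + d2)"
      have t0: "0 \<le> t" "t \<le> 1" unfolding t_def using d1p d2p by auto
      have "x = (\<lambda>l. t * x1 l + (1 - t) * x2 l)"
      proof (rule ext)
        fix l
        have "1 - t = d1 / (d1 + d2)" unfolding t_def using d1p d2p by (simp add: field_simps)
        then have e1: "t * d1 = (1 - t) * d2" unfolding t_def by simp
        have "t * x1 l + (1 - t) * x2 l = x l + (t * d1 - (1 - t) * d2) * v l"
          unfolding x1_def x2_def by (simp add: algebra_simps)
        then show "x l = t * x1 l + (1 - t) * x2 l" using e1 by simp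
      qed
      then show ?thesis using hyp_convex[OF x1h x2h t0] by simp
    qed
  qed
qed

lemma hyp_char:
  assumes "finite S"
  shows "hypersimplex m S = {x. (\<forall>i. i \<notin> S \<longrightarrow> x i = 0) \<and> (\<forall>i\<in>S. 0 \<le> x i \<and> x i \<le> 1) \<and> (\<Sum>i\<in>S. x i) = of_int m}"
  using hyp_easy[OF assms] hyp_hard_aux[OF assms] by blast

lemma card_between:
  assumes "finite T" "Z \<subseteq> T" "card Z \<le> m" "m \<le> card T"
  obtains Z' where "Z \<subseteq> Z'" "Z' \<subseteq> T" "card Z' = m"
proof -
  have fZ: "finite Z" using assms(1,2) finite_subset by blast
  have "m - card Z \<le> card (T - Z)" using assms by (simp add: card_Diff_subset fZ)
  then obtain W where W: "W \<subseteq> T - Z" "card W = m - card Z" "finite W"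
    by (rule obtain_subset_with_card_n)
  have "card (Z \<union> W) = card Z + card W" using W fZ by (subst card_Un_disjoint) auto
  then show ?thesis using that[of "Z \<union> W"] W assms(2,3) by auto
qed

context
  fixes E :: "'a set" and \<B> :: "'a set set"
  assumes M: "matroid E \<B>"
begin

lemma finE: "finite E" using M unfolding matroid_def by auto
lemma Bne: "\<B> \<noteq> {}" using M unfolding matroid_def by auto
lemma BsubE: "X \<in> \<B> \<Longrightarrow> X \<subseteq> E" using M unfolding matroid_def by auto
lemma exch: "X \<in> \<B> \<Longrightarrow> Y \<in> \<B> \<Longrightarrow> x \<in> X - Y \<Longrightarrow> \<exists>y\<in>Y - X. insert y (X - {x}) \<in> \<B>"
  using M unfolding matroid_def by blast
lemma finX: "X \<in> \<B> \<Longrightarrow> finite X" using BsubE finE finite_subset by blast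
lemma finB: "finite \<B>"
  by (rule finite_subset[of _ "Pow E"]) (use BsubE finE in auto)

lemma bases_card_aux:
  "\<forall>X. X \<in> \<B> \<longrightarrow> Y \<in> \<B> \<longrightarrow> card (X - Y) = m \<longrightarrow> card X = card Y"
proof (induction m)
  case 0
  show ?case
  proof (intro allI impI)
    fix X assume X: "X \<in> \<B>" and Y: "Y \<in> \<B>" and c: "card (X - Y) = 0"
    have "X - Y = {}" using c finX[OF X] by simp
    moreover have "Y - X = {}"
    proof (rule ccontr)
      assume "Y - X \<noteq> {}"
      then obtain y where "y \<in> Y - X" by blast
      then show False using exch[OF Y X] \<open>X - Y = {}\<close> by blast
    qed
    ultimately show "card X = card Y" by (metis Diff_eq_empty_iff subset_antisym)
  qed
next
  case (Suc m)
  show ?case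
  proof (intro allI impI)
    fix X assume X: "X \<in> \<B>" and Y: "Y \<in> \<B>" and c: "card (X - Y) = Suc m"
    then obtain x where x: "x \<in> X - Y" by (metis card.empty ex_in_conv nat.distinct(1))
    obtain y where y: "y \<in> Y - X" and X': "insert y (X - {x}) \<in> \<B>" using exch[OF X Y x] by blast
    have "insert y (X - {x}) - Y = (X - Y) - {x}" using y by auto
    then have "card (insert y (X - {x}) - Y) = m" using c x finX[OF X] by simp
    then have "card (insert y (X - {x})) = card Y" using Suc.IH X' Y by blast
    moreover have "card X > 0" using x finX[OF X] card_gt_0_iff by blast
    moreover have "card (insert y (X - {x})) = card X" using x y finX[OF X] \<open>card X > 0\<close>
      by (simp add: card_Diff_singleton_if)
    ultimately show "card X = card Y" by simp
  qed
qed

lemma bases_card: "X \<in> \<B> \<Longrightarrow> Y \<in> \<B> \<Longrightarrow> card X = card Y"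
  using bases_card_aux by blast

lemma rk_obtain: "\<exists>X\<in>\<B>. rk \<B> A = card (A \<inter> X)"
proof -
  have "rk \<B> A \<in> (\<lambda>X. card (A \<inter> X)) ` \<B>" unfolding rk_def
    using finB Bne by (intro Max_in) auto
  then show ?thesis by auto
qed

lemma rk_ge: "X \<in> \<B> \<Longrightarrow> card (A \<inter> X) \<le> rk \<B> A"
  unfolding rk_def using finB by (intro Max_ge) auto

lemma rkE: "X \<in> \<B> \<Longrightarrow> rk \<B> E = card X"
proof -
  assume X: "X \<in> \<B>"
  obtain Y where Y: "Y \<in> \<B>" "rk \<B> E = card (E \<inter> Y)" using rk_obtain by blast
  then have "E \<inter> Y = Y" using BsubE by auto
  then show ?thesis using Y bases_card[OF X Y(1)] by simp
qed

lemma rk_le_k: "rk \<B> A \<le> rk \<B> E"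
proof -
  obtain Y where Y: "Y \<in> \<B>" "rk \<B> A = card (A \<inter> Y)" using rk_obtain by blast
  then show ?thesis using rkE[OF Y(1)] finX[OF Y(1)] by (simp add: card_mono)
qed

lemma rk_le_card: "finite A \<Longrightarrow> rk \<B> A \<le> card A"
  using rk_obtain by (metis Int_lower1 card_mono)

lemma rk_mono: "A \<subseteq> A' \<Longrightarrow> rk \<B> A \<le> rk \<B> A'"
proof -
  assume "A \<subseteq> A'"
  obtain Y where Y: "Y \<in> \<B>" "rk \<B> A = card (A \<inter> Y)" using rk_obtain by blast
  have "card (A \<inter> Y) \<le> card (A' \<inter> Y)" using \<open>A \<subseteq> A'\<close> finX[OF Y(1)] by (intro card_mono) auto
  then show ?thesis using Y rk_ge[OF Y(1), of A'] by simp
qed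

lemma indep_empty: "indep \<B> {}" using Bne unfolding indep_def by auto
lemma indep_subset: "indep \<B> I \<Longrightarrow> J \<subseteq> I \<Longrightarrow> indep \<B> J" unfolding indep_def by blast
lemma indep_finite: "indep \<B> I \<Longrightarrow> finite I" unfolding indep_def using finX finite_subset by blast
lemma indep_subE: "indep \<B> I \<Longrightarrow> I \<subseteq> E" unfolding indep_def using BsubE by blast

lemma indep_card_le: "indep \<B> I \<Longrightarrow> I \<subseteq> A \<Longrightarrow> card I \<le> rk \<B> A"
proof -
  assume "indep \<B> I" "I \<subseteq> A"
  then obtain X where X: "X \<in> \<B>" "I \<subseteq> X" unfolding indep_def by blast
  have "card I \<le> card (A \<inter> X)" using X \<open>I \<subseteq> A\<close> finX[OF X(1)] by (intro card_mono) auto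
  then show ?thesis using rk_ge[OF X(1), of A] by linarith
qed

lemma indep_rk: "indep \<B> I \<Longrightarrow> rk \<B> I = card I"
  using indep_card_le[of I I] rk_le_card[of I] indep_finite by fastforce

lemma rk_indep: "finite I \<Longrightarrow> rk \<B> I = card I \<Longrightarrow> indep \<B> I"
proof -
  assume f: "finite I" and r: "rk \<B> I = card I"
  obtain Y where Y: "Y \<in> \<B>" "rk \<B> I = card (I \<inter> Y)" using rk_obtain by blast
  then have "I \<inter> Y = I" using f r by (metis Int_lower1 card_subset_eq)
  then show ?thesis unfolding indep_def using Y by blast
qed

lemma dep_rk: "finite I \<Longrightarrow> \<not> indep \<B> I \<Longrightarrow> rk \<B> I < card I"
  using rk_indep rk_le_card by fastforce

lemma rk_indep_subset: "\<exists>I. indep \<B> I \<and> I \<subseteq> A \<and> card I = rk \<B> A"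
proof -
  obtain Y where Y: "Y \<in> \<B>" "rk \<B> A = card (A \<inter> Y)" using rk_obtain by blast
  then show ?thesis unfolding indep_def by (intro exI[of _ "A \<inter> Y"]) auto
qed

lemma augment:
  assumes I: "indep \<B> I" and J: "indep \<B> J" and c: "card I < card J"
  shows "\<exists>e\<in>J - I. indep \<B> (insert e I)"
proof (rule ccontr)
  assume no: "\<not> (\<exists>e\<in>J - I. indep \<B> (insert e I))"
  obtain BJ where BJ: "BJ \<in> \<B>" "J \<subseteq> BJ" using J unfolding indep_def by blast
  obtain B0 where B0: "B0 \<in> \<B>" "I \<subseteq> B0" using I unfolding indep_def by blast
  have "\<exists>BI. (BI \<in> \<B> \<and> I \<subseteq> BI) \<and> (\<forall>B'. (B' \<in> \<B> \<and> I \<subseteq> B') \<longrightarrow> card (B' \<inter> BJ) \<le> card (BI \<inter> BJ))"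
  proof (rule ex_has_greatest_nat[where b = "Suc (card BJ)"])
    show "B0 \<in> \<B> \<and> I \<subseteq> B0" using B0 by blast
    show "\<forall>y. y \<in> \<B> \<and> I \<subseteq> y \<longrightarrow> card (y \<inter> BJ) < Suc (card BJ)"
      using finX[OF BJ(1)] by (auto simp: less_Suc_eq_le intro: card_mono)
  qed
  then obtain BI where BI: "BI \<in> \<B>" "I \<subseteq> BI"
    and mx: "\<And>B'. B' \<in> \<B> \<Longrightarrow> I \<subseteq> B' \<Longrightarrow> card (B' \<inter> BJ) \<le> card (BI \<inter> BJ)" by blast
  have s1: "BI - I \<subseteq> BJ"
  proof
    fix x assume x: "x \<in> BI - I"
    show "x \<in> BJ"
    proof (rule ccontr)
      assume "x \<notin> BJ"
      then obtain y where y: "y \<in> BJ - BI" and B': "insert y (BI - {x}) \<in> \<B>"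
        using exch[OF BI(1) BJ(1)] x by blast
      have "I \<subseteq> insert y (BI - {x})" using BI(2) x by auto
      then have le: "card (insert y (BI - {x}) \<inter> BJ) \<le> card (BI \<inter> BJ)" using mx B' by blast
      have "insert y (BI - {x}) \<inter> BJ = insert y (BI \<inter> BJ)" using y \<open>x \<notin> BJ\<close> by auto
      then have "card (insert y (BI - {x}) \<inter> BJ) = Suc (card (BI \<inter> BJ))"
        using y finX[OF BI(1)] by simp
      then show False using le by simp
    qed
  qed
  have s2: "BI - I \<subseteq> BJ - J"
  proof
    fix x assume x: "x \<in> BI - I"
    have "x \<notin> J"
    proof
      assume "x \<in> J"
      have "indep \<B> (insert x I)" unfolding indep_def using BI x by blast
      then show False using no x \<open>x \<in> J\<close> by blast
    qed
    then show "x \<in> BJ - J" using s1 x by blast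
  qed
  have fI: "finite I" and fJ: "finite J" using I J indep_finite by auto
  have "card (BI - I) = card BI - card I" using BI fI by (simp add: card_Diff_subset)
  moreover have "card (BJ - J) = card BJ - card J" using BJ fJ by (simp add: card_Diff_subset)
  moreover have "card BI = card BJ" using bases_card BI(1) BJ(1) by blast
  moreover have "card J \<le> card BJ" using BJ finX by (simp add: card_mono)
  moreover have "card (BI - I) \<le> card (BJ - J)" using s2 finX[OF BJ(1)] by (simp add: card_mono)
  ultimately show False using c by linarith
qed

lemma extend_aux:
  "\<forall>I. indep \<B> I \<longrightarrow> I \<subseteq> A \<longrightarrow> rk \<B> A - card I = d \<longrightarrow>
      (\<exists>J. indep \<B> J \<and> I \<subseteq> J \<and> J \<subseteq> A \<and> card J = rk \<B> A)"
proof (induction d)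
  case 0
  then show ?case using indep_card_le by (metis diff_is_0_eq le_antisym order_refl)
next
  case (Suc d)
  show ?case
  proof (intro allI impI)
    fix I assume I: "indep \<B> I" "I \<subseteq> A" "rk \<B> A - card I = Suc d"
    obtain K where K: "indep \<B> K" "K \<subseteq> A" "card K = rk \<B> A" using rk_indep_subset by blast
    have "card I < card K" using I(3) K(3) by simp
    then obtain e where e: "e \<in> K - I" "indep \<B> (insert e I)" using augment[OF I(1) K(1)] by blast
    have "card (insert e I) = Suc (card I)" using e indep_finite[OF I(1)] by simp
    then have "rk \<B> A - card (insert e I) = d" using I(3) by simp
    then obtain J where "indep \<B> J" "insert e I \<subseteq> J" "J \<subseteq> A" "card J = rk \<B> A"
      using Suc.IH e I K by blast
    then show "\<exists>J. indep \<B> J \<and> I \<subseteq> J \<and> J \<subseteq> A \<and> card J = rk \<B> A" by blast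
  qed
qed

lemma extend: "indep \<B> I \<Longrightarrow> I \<subseteq> A \<Longrightarrow> \<exists>J. indep \<B> J \<and> I \<subseteq> J \<and> J \<subseteq> A \<and> card J = rk \<B> A"
  using extend_aux by blast

lemma submod: "rk \<B> (A \<union> C) + rk \<B> (A \<inter> C) \<le> rk \<B> A + rk \<B> C"
proof -
  obtain I where I: "indep \<B> I" "I \<subseteq> A \<inter> C" "card I = rk \<B> (A \<inter> C)" using rk_indep_subset by blast
  obtain J where J: "indep \<B> J" "I \<subseteq> J" "J \<subseteq> A \<union> C" "card J = rk \<B> (A \<union> C)"
    using extend[OF I(1)] I(2) by blast
  have fJ: "finite J" using indep_finite J by blast
  have "card (J \<inter> A) \<le> rk \<B> A" using indep_subset[OF J(1)] by (intro indep_card_le) auto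
  moreover have "card (J \<inter> C) \<le> rk \<B> C" using indep_subset[OF J(1)] by (intro indep_card_le) auto
  moreover have "card (J \<inter> A) + card (J \<inter> C) = card ((J \<inter> A) \<union> (J \<inter> C)) + card ((J \<inter> A) \<inter> (J \<inter> C))"
    using fJ by (intro card_Un_Int) auto
  moreover have "card ((J \<inter> A) \<union> (J \<inter> C)) = card J" using J(3) by (metis Int_Un_distrib le_iff_inf)
  moreover have "card I \<le> card ((J \<inter> A) \<inter> (J \<inter> C))" using I(2) J(2) fJ by (intro card_mono) auto
  ultimately show ?thesis using I(3) J(4) by linarith
qed

lemma closure_rk:
  assumes "indep \<B> I" "I \<subseteq> S" "\<not> indep \<B> (insert e I)"
  shows "rk \<B> (insert e S) \<le> rk \<B> S"
proof -
  have fI: "finite I" using assms(1) indep_finite by blast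
  have "rk \<B> (insert e I) < card (insert e I)" using dep_rk assms(3) fI by simp
  then have r1: "rk \<B> (insert e I) \<le> card I" using fI by (simp add: card_insert_if split: if_splits)
  have "card I \<le> rk \<B> (S \<inter> insert e I)" using assms(1,2) by (intro indep_card_le) auto
  moreover have eq: "S \<union> insert e I = insert e S" using assms(2) by auto
  moreover have "rk \<B> (insert e S) + rk \<B> (S \<inter> insert e I) \<le> rk \<B> S + rk \<B> (insert e I)"
    using submod[of S "insert e I"] unfolding eq .
  ultimately show ?thesis using r1 by linarith
qed

lemma circuit_props:
  assumes "circuit E \<B> C"
  shows "finite C" "C \<noteq> {}" "rk \<B> C + 1 = card C" "\<And>D. D \<subset> C \<Longrightarrow> indep \<B> D" "\<not> indep \<B> C" "C \<subseteq> E"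
proof -
  show CE: "C \<subseteq> E" and nd: "\<not> indep \<B> C" and pr: "\<And>D. D \<subset> C \<Longrightarrow> indep \<B> D"
    using assms unfolding circuit_def by auto
  show fC: "finite C" using CE finE finite_subset by blast
  show ne: "C \<noteq> {}" using nd indep_empty by blast
  then obtain c where c: "c \<in> C" by blast
  have "indep \<B> (C - {c})" using pr c by blast
  then have "card (C - {c}) \<le> rk \<B> C" by (intro indep_card_le) auto
  moreover have "rk \<B> C < card C" using dep_rk fC nd by blast
  ultimately show "rk \<B> C + 1 = card C" using c fC by (simp add: card_Diff_singleton)
qed

lemma circuit_over:
  assumes C: "circuit E \<B> C" and Z: "C - A \<noteq> {}" and r: "rk \<B> (A \<union> (C - A)) \<ge> rk \<B> A + card (C - A)"
  shows False
proof -
  note cp = circuit_props[OF C]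
  have "A \<inter> C \<subset> C" using Z by auto
  then have "indep \<B> (A \<inter> C)" using cp(4) by blast
  then have r2: "card (A \<inter> C) \<le> rk \<B> (A \<inter> C)" by (intro indep_card_le) auto
  have eq: "A \<union> (C - A) = A \<union> C" by auto
  have sm: "rk \<B> (A \<union> (C - A)) + rk \<B> (A \<inter> C) \<le> rk \<B> A + rk \<B> C" unfolding eq by (rule submod)
  moreover have "card (C - A) + card (A \<inter> C) = card C" using card_Int_Diff[OF cp(1), of A]
    by (simp add: Int_commute)
  ultimately show False using r r2 cp(3) by linarith
qed

lemma unique_circuit:
  assumes C: "circuit E \<B> C" and D: "circuit E \<B> D" and S: "indep \<B> S"
    and CS: "C \<subseteq> insert c S" and DS: "D \<subseteq> insert c S"
  shows "C = D"
proof (rule ccontr)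
  assume ne: "C \<noteq> D"
  note cC = circuit_props[OF C] and cD = circuit_props[OF D]
  have "\<not> C \<subseteq> D"
  proof
    assume "C \<subseteq> D"
    then have "C \<subset> D" using ne by blast
    then show False using cD(4) cC(5) by blast
  qed
  then have "C \<inter> D \<subset> C" by blast
  then have "indep \<B> (C \<inter> D)" using cC(4) by blast
  then have r1: "card (C \<inter> D) \<le> rk \<B> (C \<inter> D)" by (intro indep_card_le) auto
  have "(C \<union> D) - {c} \<subseteq> S" using CS DS by auto
  then have "indep \<B> ((C \<union> D) - {c})" using indep_subset[OF S] by blast
  then have "card ((C \<union> D) - {c}) \<le> rk \<B> (C \<union> D)" by (intro indep_card_le) auto
  moreover have "card (C \<union> D) - 1 \<le> card ((C \<union> D) - {c})"
    using diff_card_le_card_Diff[of "{c}" "C \<union> D"] by simp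
  ultimately have r2: "card (C \<union> D) \<le> rk \<B> (C \<union> D) + 1" by linarith
  have "card C + card D = card (C \<union> D) + card (C \<inter> D)" by (rule card_Un_Int[OF cC(1) cD(1)])
  moreover have "rk \<B> (C \<union> D) + rk \<B> (C \<inter> D) \<le> rk \<B> C + rk \<B> D" by (rule submod)
  ultimately show False using r1 r2 cC(3) cD(3) by linarith
qed

end

context
  fixes E :: "'a set" and \<B> :: "'a set set"
  assumes S: "split_matroid E \<B>"
begin

lemma M: "matroid E \<B>" using S unfolding split_matroid_def connected_matroid_def by blast

lemma relax_k:
  assumes "X \<subseteq> E" "card X = rk \<B> E"
  shows "X \<in> relax_all E \<B>"
proof -
  obtain m where m: "relax_all E \<B> = {X. X \<subseteq> E \<and> card X = m}"
    using S unfolding split_matroid_def uniform_on_def by blast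
  obtain X0 where X0: "X0 \<in> \<B>" using Bne[OF M] by blast
  then have "X0 \<in> relax_all E \<B>" unfolding relax_all_def by blast
  then have "card X0 = m" using m by blast
  moreover have "rk \<B> E = card X0" using rkE[OF M X0] .
  ultimately show ?thesis using m assms by simp
qed

lemma stressed_restr:
  assumes A: "stressed E \<B> A" and Y: "Y \<subseteq> A" "card Y = rk \<B> A"
  shows "indep \<B> Y"
proof -
  obtain m where m: "restr_bases \<B> A = {X. X \<subseteq> A \<and> card X = m}"
    using A unfolding stressed_def uniform_on_def by blast
  obtain I where I: "indep \<B> I" "I \<subseteq> A" "card I = rk \<B> A" using rk_indep_subset[OF M] by blast
  then have "I \<in> restr_bases \<B> A" unfolding restr_bases_def by blast
  then have "card I = m" using m by blast
  then have "Y \<in> restr_bases \<B> A" using m Y I(3) by simp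
  then show ?thesis unfolding restr_bases_def by blast
qed

lemma stressed_contr:
  assumes A: "stressed E \<B> A" and Z: "Z \<subseteq> E - A" "card Z \<le> rk \<B> E - rk \<B> A"
  shows "rk \<B> A + card Z \<le> rk \<B> (A \<union> Z)"
proof -
  obtain m where m: "contr_bases E \<B> A = {X. X \<subseteq> E - A \<and> card X = m}"
    using A unfolding stressed_def uniform_on_def by blast
  obtain X0 where X0: "X0 \<in> \<B>" "rk \<B> A = card (A \<inter> X0)" using rk_obtain[OF M] by blast
  have fX0: "finite X0" using finX[OF M X0(1)] .
  have I0: "A \<inter> X0 \<in> restr_bases \<B> A" unfolding restr_bases_def indep_def using X0 by auto
  have "(X0 - A) \<union> (A \<inter> X0) = X0" by auto
  then have "\<exists>I\<in>restr_bases \<B> A. (X0 - A) \<union> I \<in> \<B>" using I0 X0(1) by metis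
  then have "X0 - A \<in> contr_bases E \<B> A" unfolding contr_bases_def using BsubE[OF M X0(1)] by auto
  then have cm: "card (X0 - A) = m" using m by blast
  have "card X0 = card (X0 \<inter> A) + card (X0 - A)" using card_Int_Diff[OF fX0] .
  then have mk: "m = rk \<B> E - rk \<B> A" using cm X0(2) rkE[OF M X0(1)] by (simp add: Int_commute)
  have "card (X0 - A) \<le> card (E - A)" using BsubE[OF M X0(1)] finE[OF M] by (intro card_mono) auto
  then obtain Z' where Z': "Z \<subseteq> Z'" "Z' \<subseteq> E - A" "card Z' = m"
    using card_between[of "E - A" Z m] finE[OF M] Z cm mk by auto
  then have "Z' \<in> contr_bases E \<B> A" using m by blast
  then obtain I where I: "I \<in> restr_bases \<B> A" "Z' \<union> I \<in> \<B>" unfolding contr_bases_def by blast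
  have IA: "I \<subseteq> A" "card I = rk \<B> A" "indep \<B> I" using I(1) unfolding restr_bases_def by auto
  have fZ: "finite Z" using Z(1) finE[OF M] finite_subset by blast
  have fI: "finite I" using indep_finite[OF M IA(3)] .
  have "Z \<inter> I = {}" using Z(1) IA(1) by auto
  then have "card (Z \<union> I) = card Z + card I" using fZ fI by (simp add: card_Un_disjoint)
  moreover have "card (Z \<union> I) \<le> card ((A \<union> Z) \<inter> (Z' \<union> I))"
    using Z'(1) IA(1) finX[OF M I(2)] by (intro card_mono) auto
  moreover have "card ((A \<union> Z) \<inter> (Z' \<union> I)) \<le> rk \<B> (A \<union> Z)" using rk_ge[OF M I(2)] .
  ultimately show ?thesis using IA(2) by linarith
qed

lemma circuit_stressed:
  assumes C: "circuit E \<B> C" and Ck: "card C \<le> rk \<B> E"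
  shows "\<exists>A. stressed E \<B> A \<and> C \<subseteq> A \<and> card C = rk \<B> A + 1"
proof -
  note cp = circuit_props[OF M C]
  obtain c where c: "c \<in> C" using cp(2) by blast
  have "indep \<B> (C - {c})" using cp(4) c by blast
  then obtain X0 where X0: "X0 \<in> \<B>" "C - {c} \<subseteq> X0" unfolding indep_def by blast
  have fX0: "finite X0" using finX[OF M X0(1)] .
  have cX0: "c \<notin> X0"
  proof
    assume "c \<in> X0"
    then have "C \<subseteq> X0" using X0(2) by blast
    then show False using cp(5) X0(1) unfolding indep_def by blast
  qed
  have k: "card X0 = rk \<B> E" using rkE[OF M X0(1)] by simp
  have c1: "card (C - {c}) = card C - 1" using c cp(1) by (simp add: card_Diff_singleton)
  have c2: "card C > 0" using cp(1) cp(2) by (simp add: card_gt_0_iff)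
  have cl: "card (C - {c}) < card X0" using c1 c2 Ck k by linarith
  have "\<not> X0 \<subseteq> C - {c}"
  proof
    assume "X0 \<subseteq> C - {c}"
    then have "card X0 \<le> card (C - {c})" using cp(1) by (intro card_mono) auto
    then show False using cl by linarith
  qed
  then obtain b where b: "b \<in> X0" "b \<notin> C - {c}" by blast
  define X where "X = insert c (X0 - {b})"
  have XE: "X \<subseteq> E" unfolding X_def using BsubE[OF M X0(1)] cp(6) c by auto
  have cX: "card X = rk \<B> E"
  proof -
    have "c \<notin> X0 - {b}" using cX0 by blast
    then have "card X = Suc (card (X0 - {b}))" unfolding X_def using fX0 by simp
    moreover have "card (X0 - {b}) = card X0 - 1" using b(1) by (simp add: card_Diff_singleton)
    moreover have "card X0 > 0" using b(1) fX0 card_gt_0_iff by blast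
    ultimately show ?thesis using k by linarith
  qed
  have CX: "C \<subseteq> X" unfolding X_def using X0(2) b by auto
  have "X \<notin> \<B>"
  proof
    assume "X \<in> \<B>"
    then show False using CX cp(5) unfolding indep_def by blast
  qed
  moreover have "X \<in> relax_all E \<B>" using relax_k XE cX by blast
  ultimately obtain A where A: "stressed E \<B> A" "X \<in> cover E \<B> A"
    unfolding relax_all_def by blast
  have XA: "rk \<B> A + 1 \<le> card (X \<inter> A)" using A(2) unfolding cover_def by simp
  have AE: "A \<subseteq> E" using A(1) unfolding stressed_def by blast
  have fA: "finite A" using AE finE[OF M] finite_subset by blast
  obtain D where D: "D \<subseteq> X \<inter> A" "card D = rk \<B> A + 1" "finite D"
    using obtain_subset_with_card_n[OF XA] by blast
  have "circuit E \<B> D" unfolding circuit_def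
  proof (intro conjI allI impI)
    show "D \<subseteq> E" using D(1) AE by blast
    show "\<not> indep \<B> D"
    proof
      assume "indep \<B> D"
      then have "card D \<le> rk \<B> A" using D(1) by (intro indep_card_le[OF M]) auto
      then show False using D(2) by simp
    qed
    fix D' assume D': "D' \<subset> D"
    then have "card D' < card D" using D(3) psubset_card_mono by blast
    then have "card D' \<le> rk \<B> A" using D(2) by simp
    moreover have "rk \<B> A \<le> card A" using rk_le_card[OF M fA] .
    moreover have "D' \<subseteq> A" using D' D(1) by blast
    ultimately obtain Y where Y: "D' \<subseteq> Y" "Y \<subseteq> A" "card Y = rk \<B> A"
      using card_between[OF fA, of D' "rk \<B> A"] by blast
    then have "indep \<B> Y" using stressed_restr[OF A(1)] by blast
    then show "indep \<B> D'" using indep_subset[OF M] Y(1) by blast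
  qed
  moreover have "indep \<B> (X0 - {b})" unfolding indep_def using X0(1) by blast
  moreover have "D \<subseteq> insert c (X0 - {b})" using D(1) unfolding X_def by blast
  moreover have "C \<subseteq> insert c (X0 - {b})" using CX unfolding X_def by blast
  ultimately have "C = D" using unique_circuit[OF M C] by blast
  then show ?thesis using A(1) D by blast
qed

lemma pcf_basic:
  assumes F: "proper_cyclic_flat E \<B> F"
  shows "F \<subseteq> E" "F \<noteq> {}" "F \<noteq> E" "\<And>e. e \<in> E - F \<Longrightarrow> rk \<B> F < rk \<B> (insert e F)"
    "\<And>x. x \<in> F \<Longrightarrow> \<exists>C. circuit E \<B> C \<and> C \<subseteq> F \<and> x \<in> C" "finite F"
proof -
  show FE: "F \<subseteq> E" "F \<noteq> {}" "F \<noteq> E" "\<And>e. e \<in> E - F \<Longrightarrow> rk \<B> F < rk \<B> (insert e F)"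
    using F unfolding proper_cyclic_flat_def cyclic_flat_def flat_def by blast+
  have cyc: "F = \<Union>{C. circuit E \<B> C \<and> C \<subseteq> F}"
    using F unfolding proper_cyclic_flat_def cyclic_flat_def by blast
  show "\<And>x. x \<in> F \<Longrightarrow> \<exists>C. circuit E \<B> C \<and> C \<subseteq> F \<and> x \<in> C"
  proof -
    fix x assume "x \<in> F"
    then have "x \<in> \<Union>{C. circuit E \<B> C \<and> C \<subseteq> F}" using cyc by simp
    then show "\<exists>C. circuit E \<B> C \<and> C \<subseteq> F \<and> x \<in> C" by blast
  qed
  show "finite F" using FE(1) finE[OF M] finite_subset by blast
qed

lemma pcf_stressed:
  assumes F: "proper_cyclic_flat E \<B> F"
  shows "stressed E \<B> F" "rk \<B> F < rk \<B> E" "rk \<B> F < card F"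
proof -
  note pb = pcf_basic[OF F]
  obtain e where e: "e \<in> E - F" using pb(1,3) by blast
  have rkk: "rk \<B> F < rk \<B> E" using pb(4)[OF e] rk_le_k[OF M, of "insert e F"] by linarith
  obtain x where "x \<in> F" using pb(2) by blast
  then obtain C where C: "circuit E \<B> C" "C \<subseteq> F" using pb(5) by blast
  note cp = circuit_props[OF M C(1)]
  have "rk \<B> C \<le> rk \<B> F" using rk_mono[OF M C(2)] .
  then have "card C \<le> rk \<B> E" using cp(3) rkk by linarith
  then obtain A where A: "stressed E \<B> A" "C \<subseteq> A" "card C = rk \<B> A + 1"
    using circuit_stressed[OF C(1)] by blast
  have AE: "A \<subseteq> E" using A(1) unfolding stressed_def by blast
  have AF: "A \<subseteq> F"
  proof
    fix e assume eA: "e \<in> A"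
    show "e \<in> F"
    proof (rule ccontr)
      assume eF: "e \<notin> F"
      obtain c where c: "c \<in> C" using cp(2) by blast
      have I: "indep \<B> (C - {c})" using cp(4) c by blast
      have IF: "C - {c} \<subseteq> F" using C(2) by blast
      have cI: "card (C - {c}) = rk \<B> A" using A(3) c cp(1) by (simp add: card_Diff_singleton)
      have "e \<notin> C - {c}" using eF IF by blast
      then have cI2: "card (insert e (C - {c})) = rk \<B> A + 1" using cI cp(1) by simp
      have "\<not> indep \<B> (insert e (C - {c}))"
      proof
        assume "indep \<B> (insert e (C - {c}))"
        then have "card (insert e (C - {c})) \<le> rk \<B> A"
          using eA A(2) by (intro indep_card_le[OF M]) auto
        then show False using cI2 by simp
      qed
      then have "rk \<B> (insert e F) \<le> rk \<B> F" using closure_rk[OF M I IF] by blast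
      moreover have "rk \<B> F < rk \<B> (insert e F)" using pb(4) eA AE eF by blast
      ultimately show False by simp
    qed
  qed
  have FA: "F \<subseteq> A"
  proof
    fix x assume "x \<in> F"
    then obtain C' where C': "circuit E \<B> C'" "C' \<subseteq> F" "x \<in> C'" using pb(5) by blast
    show "x \<in> A"
    proof (rule ccontr)
      assume xA: "x \<notin> A"
      define Z where "Z = C' - A"
      have Zne: "Z \<noteq> {}" using xA C'(3) unfolding Z_def by blast
      have ZE: "Z \<subseteq> E - A" using circuit_props(6)[OF M C'(1)] unfolding Z_def by blast
      show False
      proof (cases "card Z \<le> rk \<B> E - rk \<B> A")
        case True
        then have "rk \<B> A + card Z \<le> rk \<B> (A \<union> Z)" using stressed_contr[OF A(1) ZE] by blast
        then have "rk \<B> A + card (C' - A) \<le> rk \<B> (A \<union> (C' - A))" "C' - A \<noteq> {}"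
          using Zne unfolding Z_def by simp_all
        then show False using circuit_over[OF M C'(1)] by blast
      next
        case False
        then obtain Z0 where Z0: "Z0 \<subseteq> Z" "card Z0 = rk \<B> E - rk \<B> A" "finite Z0"
          using obtain_subset_with_card_n[of "rk \<B> E - rk \<B> A" Z] by auto
        have "Z0 \<subseteq> E - A" using Z0(1) ZE by blast
        then have "rk \<B> A + card Z0 \<le> rk \<B> (A \<union> Z0)" using stressed_contr[OF A(1), of Z0] Z0(2) by simp
        moreover have "rk \<B> A \<le> rk \<B> E" using rk_le_k[OF M] .
        moreover have "A \<union> Z0 \<subseteq> F" using AF Z0(1) C'(2) unfolding Z_def by blast
        then have "rk \<B> (A \<union> Z0) \<le> rk \<B> F" using rk_mono[OF M] by blast
        ultimately show False using Z0(2) rkk by linarith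
      qed
    qed
  qed
  have FeqA: "F = A" using AF FA by blast
  show "stressed E \<B> F" using A(1) FeqA by simp
  show "rk \<B> F < rk \<B> E" using rkk .
  have "card C \<le> card F" using C(2) pb(6) by (intro card_mono)
  then show "rk \<B> F < card F" using A(3) FeqA by simp
qed

lemma main_comb:
  assumes F: "proper_cyclic_flat E \<B> F" and G: "proper_cyclic_flat E \<B> G" and FG: "F \<noteq> G"
  shows "rk \<B> (F \<union> G) = rk \<B> E" "rk \<B> (F \<inter> G) = card (F \<inter> G)"
proof -
  note pF = pcf_stressed[OF F] and pG = pcf_stressed[OF G]
  note bF = pcf_basic[OF F] and bG = pcf_basic[OF G]
  have step1: "card (F \<inter> G) < rk \<B> F"
  proof (rule ccontr)
    assume "\<not> card (F \<inter> G) < rk \<B> F"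
    then obtain I where I: "I \<subseteq> F \<inter> G" "card I = rk \<B> F" "finite I"
      using obtain_subset_with_card_n[of "rk \<B> F" "F \<inter> G"] by auto
    have indI: "indep \<B> I" using stressed_restr[OF pF(1)] I by blast
    have FsubG: "F \<subseteq> G"
    proof
      fix e assume eF: "e \<in> F"
      show "e \<in> G"
      proof (rule ccontr)
        assume eG: "e \<notin> G"
        have "e \<notin> I" using eG I(1) by blast
        then have ci: "card (insert e I) = rk \<B> F + 1" using I by simp
        have "\<not> indep \<B> (insert e I)"
        proof
          assume "indep \<B> (insert e I)"
          then have "card (insert e I) \<le> rk \<B> F" using eF I(1) by (intro indep_card_le[OF M]) auto
          then show False using ci by simp
        qed
        then have "rk \<B> (insert e G) \<le> rk \<B> G" using closure_rk[OF M indI] I(1) by blast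
        moreover have "rk \<B> G < rk \<B> (insert e G)" using bG(4) eF bF(1) eG by blast
        ultimately show False by simp
      qed
    qed
    then obtain g where g: "g \<in> G" "g \<notin> F" using FG by blast
    show False
    proof (cases "rk \<B> G \<le> rk \<B> F")
      case True
      have "rk \<B> F < rk \<B> (insert g F)" using bF(4) g bG(1) by blast
      moreover have "rk \<B> (insert g F) \<le> rk \<B> G" using rk_mono[OF M] FsubG g by blast
      ultimately show False using True by simp
    next
      case False
      obtain D where D: "D \<subseteq> F" "card D = rk \<B> F + 1" "finite D"
        using obtain_subset_with_card_n[of "rk \<B> F + 1" F] pF(3) by auto
      have nD: "\<not> indep \<B> D"
      proof
        assume "indep \<B> D"
        then have "card D \<le> rk \<B> F" using D(1) by (intro indep_card_le[OF M])
        then show False using D(2) by simp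
      qed
      have "D \<subseteq> G" using D(1) FsubG by blast
      moreover have "card D \<le> rk \<B> G" using D(2) False by simp
      moreover have "rk \<B> G \<le> card G" using pG(3) by simp
      ultimately obtain Y where Y: "D \<subseteq> Y" "Y \<subseteq> G" "card Y = rk \<B> G"
        using card_between[OF bG(6), of D "rk \<B> G"] by blast
      then have "indep \<B> Y" using stressed_restr[OF pG(1)] by blast
      then show False using nD indep_subset[OF M] Y(1) by blast
    qed
  qed
  have indFG: "indep \<B> (F \<inter> G)"
  proof -
    have "card (F \<inter> G) \<le> rk \<B> F" "rk \<B> F \<le> card F" using step1 pF(3) by simp_all
    then obtain Y where Y: "F \<inter> G \<subseteq> Y" "Y \<subseteq> F" "card Y = rk \<B> F"
      using card_between[OF bF(6), of "F \<inter> G" "rk \<B> F"] by blast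
    then have "indep \<B> Y" using stressed_restr[OF pF(1)] by blast
    then show ?thesis using indep_subset[OF M] Y(1) by blast
  qed
  show "rk \<B> (F \<inter> G) = card (F \<inter> G)" using indep_rk[OF M indFG] .
  have "\<not> G \<subseteq> F"
  proof
    assume "G \<subseteq> F"
    then have "indep \<B> G" using indFG by (simp add: Int_absorb1)
    obtain x where "x \<in> G" using bG(2) by blast
    then obtain C where "circuit E \<B> C" "C \<subseteq> G" using bG(5) by blast
    then show False using circuit_props(5)[OF M] indep_subset[OF M \<open>indep \<B> G\<close>] by blast
  qed
  then obtain g where g: "g \<in> G" "g \<notin> F" by blast
  then obtain C where C: "circuit E \<B> C" "C \<subseteq> G" "g \<in> C" using bG(5) by blast
  define Z where "Z = C - F"
  have Zne: "Z \<noteq> {}" using g C(3) unfolding Z_def by blast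
  have ZE: "Z \<subseteq> E - F" using circuit_props(6)[OF M C(1)] unfolding Z_def by blast
  have "\<not> card Z \<le> rk \<B> E - rk \<B> F"
  proof
    assume "card Z \<le> rk \<B> E - rk \<B> F"
    then have "rk \<B> F + card Z \<le> rk \<B> (F \<union> Z)" using stressed_contr[OF pF(1) ZE] by blast
    then have "rk \<B> F + card (C - F) \<le> rk \<B> (F \<union> (C - F))" "C - F \<noteq> {}"
      using Zne unfolding Z_def by simp_all
    then show False using circuit_over[OF M C(1)] by blast
  qed
  then obtain Z0 where Z0: "Z0 \<subseteq> Z" "card Z0 = rk \<B> E - rk \<B> F" "finite Z0"
    using obtain_subset_with_card_n[of "rk \<B> E - rk \<B> F" Z] by auto
  have "Z0 \<subseteq> E - F" using Z0(1) ZE by blast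
  then have "rk \<B> F + card Z0 \<le> rk \<B> (F \<union> Z0)" using stressed_contr[OF pF(1), of Z0] Z0(2) by simp
  moreover have "F \<union> Z0 \<subseteq> F \<union> G" using Z0(1) C(2) unfolding Z_def by blast
  then have "rk \<B> (F \<union> Z0) \<le> rk \<B> (F \<union> G)" using rk_mono[OF M] by blast
  moreover have "rk \<B> (F \<union> G) \<le> rk \<B> E" using rk_le_k[OF M] .
  ultimately show "rk \<B> (F \<union> G) = rk \<B> E" using Z0(2) pF(2) by linarith
qed

end

lemma restr_hyp:
  assumes "finite S"
  shows "restr S x \<in> hypersimplex m S \<longleftrightarrow> (\<forall>i\<in>S. 0 \<le> x i \<and> x i \<le> 1) \<and> (\<Sum>i\<in>S. x i) = of_int m"
proof -
  have "(\<Sum>i\<in>S. restr S x i) = (\<Sum>i\<in>S. x i)" unfolding restr_def by (rule sum.cong) auto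
  then show ?thesis unfolding hyp_char[OF assms] restr_def by auto
qed

lemma sum_all1:
  assumes "finite A" "\<forall>i\<in>A. x i \<le> (1::real)" "(\<Sum>i\<in>A. x i) = real (card A)"
  shows "\<forall>i\<in>A. x i = 1"
proof -
  have "(\<Sum>i\<in>A. 1 - x i) = real (card A) - (\<Sum>i\<in>A. x i)" by (simp add: sum_subtractf)
  then have z: "(\<Sum>i\<in>A. 1 - x i) = 0" using assms(3) by simp
  have nn: "\<forall>i\<in>A. 0 \<le> 1 - x i" using assms(2) by simp
  have "\<forall>i\<in>A. 1 - x i = 0" using sum_nonneg_eq_0_iff[OF assms(1), of "\<lambda>i. 1 - x i"] nn z by simp
  then show ?thesis by simp
qed

lemma sum_all0:
  assumes "finite A" "\<forall>i\<in>A. 0 \<le> x i" "(\<Sum>i\<in>A. x i) = (0::real)"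
  shows "\<forall>i\<in>A. x i = 0"
  using sum_nonneg_eq_0_iff[OF assms(1), of x] assms(2,3) by simp

lemma sum_le_card:
  assumes "\<forall>i\<in>A. x i \<le> (1::real)"
  shows "(\<Sum>i\<in>A. x i) \<le> real (card A)"
proof -
  have "(\<Sum>i\<in>A. x i) \<le> (\<Sum>i\<in>A. (1::real))" using assms by (intro sum_mono) auto
  then show ?thesis by simp
qed

lemma sums4:
  assumes fin: "finite E" and FE: "F \<subseteq> E" and GE: "G \<subseteq> E"
  shows "(\<Sum>i\<in>E. x i) = (\<Sum>i\<in>F \<inter> G. x i) + (\<Sum>i\<in>F - G. x i) + (\<Sum>i\<in>G - F. x i) + (\<Sum>i\<in>E - (F \<union> G). x i)"
    "(\<Sum>i\<in>F. x i) = (\<Sum>i\<in>F \<inter> G. x i) + (\<Sum>i\<in>F - G. x i)"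
    "(\<Sum>i\<in>G. x i) = (\<Sum>i\<in>F \<inter> G. x i) + (\<Sum>i\<in>G - F. x i)"
proof -
  have fF: "finite F" and fG: "finite G" using fin FE GE finite_subset by auto
  show sF: "(\<Sum>i\<in>F. x i) = (\<Sum>i\<in>F \<inter> G. x i) + (\<Sum>i\<in>F - G. x i)" using sum.Int_Diff[OF fF] .
  have "(\<Sum>i\<in>G. x i) = (\<Sum>i\<in>G \<inter> F. x i) + (\<Sum>i\<in>G - F. x i)" using sum.Int_Diff[OF fG] .
  then show "(\<Sum>i\<in>G. x i) = (\<Sum>i\<in>F \<inter> G. x i) + (\<Sum>i\<in>G - F. x i)" by (simp add: Int_commute)
  have "(\<Sum>i\<in>E. x i) = (\<Sum>i\<in>E \<inter> (F \<union> G). x i) + (\<Sum>i\<in>E - (F \<union> G). x i)" using sum.Int_Diff[OF fin] .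
  moreover have "E \<inter> (F \<union> G) = F \<union> G" using FE GE by auto
  moreover have "(\<Sum>i\<in>F \<union> G. x i) = (\<Sum>i\<in>(F \<union> G) \<inter> F. x i) + (\<Sum>i\<in>(F \<union> G) - F. x i)"
    using sum.Int_Diff fF fG by blast
  moreover have "(F \<union> G) \<inter> F = F" "(F \<union> G) - F = G - F" by auto
  ultimately show "(\<Sum>i\<in>E. x i) = (\<Sum>i\<in>F \<inter> G. x i) + (\<Sum>i\<in>F - G. x i) + (\<Sum>i\<in>G - F. x i) + (\<Sum>i\<in>E - (F \<union> G). x i)"
    using sF by simp
qed

lemma bij_part:
  fixes F G E :: "'a set" and r s g :: nat
  assumes fin: "finite E" and FE: "F \<subseteq> E" and GE: "G \<subseteq> E"
    and Qc: "Qc = {x. (\<forall>i. i \<notin> E \<longrightarrow> x i = 0) \<and> (\<forall>i\<in>E. 0 \<le> x i \<and> x i \<le> 1) \<and> (\<forall>i\<in>F \<inter> G. x i = 1)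
        \<and> (\<forall>i\<in>E - (F \<union> G). x i = 0) \<and> (\<Sum>i\<in>F - G. x i) = real r - real g \<and> (\<Sum>i\<in>G - F. x i) = real s - real g}"
    and al: "al = card (F - G)" and be: "be = card (G - F)"
  shows "\<exists>\<sigma> \<tau>. bij_betw \<sigma> {1..al} (F - G) \<and> bij_betw \<tau> {1..be} (G - F) \<and>
                bij_betw (\<lambda>x. (restr {1..al} (x \<circ> \<sigma>), restr {1..be} (x \<circ> \<tau>))) Qc
                  (hypersimplex (int r - int g) {1..al} \<times> hypersimplex (int s - int g) {1..be})"
proof -
  have fF: "finite (F - G)" and fG: "finite (G - F)" using fin FE GE finite_subset by blast+
  obtain \<sigma> where \<sigma>: "bij_betw \<sigma> {1..al} (F - G)" using ex_bij_betw_nat_finite_1[OF fF] al by blast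
  obtain \<tau> where \<tau>: "bij_betw \<tau> {1..be} (G - F)" using ex_bij_betw_nat_finite_1[OF fG] be by blast
  define \<sigma>' where "\<sigma>' = inv_into {1..al} \<sigma>"
  define \<tau>' where "\<tau>' = inv_into {1..be} \<tau>"
  have \<sigma>'b: "bij_betw \<sigma>' (F - G) {1..al}" unfolding \<sigma>'_def using bij_betw_inv_into[OF \<sigma>] .
  have \<tau>'b: "bij_betw \<tau>' (G - F) {1..be}" unfolding \<tau>'_def using bij_betw_inv_into[OF \<tau>] .
  have s1: "\<And>j. j \<in> {1..al} \<Longrightarrow> \<sigma> j \<in> F - G" using bij_betw_apply[OF \<sigma>] .
  have t1: "\<And>j. j \<in> {1..be} \<Longrightarrow> \<tau> j \<in> G - F" using bij_betw_apply[OF \<tau>] .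
  have s2: "\<And>i. i \<in> F - G \<Longrightarrow> \<sigma>' i \<in> {1..al}" using bij_betw_apply[OF \<sigma>'b] .
  have t2: "\<And>i. i \<in> G - F \<Longrightarrow> \<tau>' i \<in> {1..be}" using bij_betw_apply[OF \<tau>'b] .
  have s3: "\<And>i. i \<in> F - G \<Longrightarrow> \<sigma> (\<sigma>' i) = i" unfolding \<sigma>'_def
    using \<sigma> by (simp add: bij_betw_def f_inv_into_f)
  have t3: "\<And>i. i \<in> G - F \<Longrightarrow> \<tau> (\<tau>' i) = i" unfolding \<tau>'_def
    using \<tau> by (simp add: bij_betw_def f_inv_into_f)
  have s4: "\<And>j. j \<in> {1..al} \<Longrightarrow> \<sigma>' (\<sigma> j) = j" unfolding \<sigma>'_def
    using \<sigma> by (simp add: bij_betw_def inv_into_f_f)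
  have t4: "\<And>j. j \<in> {1..be} \<Longrightarrow> \<tau>' (\<tau> j) = j" unfolding \<tau>'_def
    using \<tau> by (simp add: bij_betw_def inv_into_f_f)
  define H1 where "H1 = hypersimplex (int r - int g) {1..al}"
  define H2 where "H2 = hypersimplex (int s - int g) {1..be}"
  have H1m: "\<And>y. y \<in> H1 \<longleftrightarrow> (\<forall>j. j \<notin> {1..al} \<longrightarrow> y j = 0) \<and> (\<forall>j\<in>{1..al}. 0 \<le> y j \<and> y j \<le> 1)
      \<and> (\<Sum>j\<in>{1..al}. y j) = real r - real g"
    unfolding H1_def hyp_char[OF finite_atLeastAtMost] by simp
  have H2m: "\<And>y. y \<in> H2 \<longleftrightarrow> (\<forall>j. j \<notin> {1..be} \<longrightarrow> y j = 0) \<and> (\<forall>j\<in>{1..be}. 0 \<le> y j \<and> y j \<le> 1)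
      \<and> (\<Sum>j\<in>{1..be}. y j) = real s - real g"
    unfolding H2_def hyp_char[OF finite_atLeastAtMost] by simp
  define \<phi> where "\<phi> = (\<lambda>x::'a \<Rightarrow> real. (restr {1..al} (x \<circ> \<sigma>), restr {1..be} (x \<circ> \<tau>)))"
  define \<psi> where "\<psi> = (\<lambda>p::(nat \<Rightarrow> real) \<times> (nat \<Rightarrow> real). \<lambda>i. if i \<in> F \<inter> G then 1 else if i \<in> F - G then fst p (\<sigma>' i)
      else if i \<in> G - F then snd p (\<tau>' i) else 0)"
  have "bij_betw \<phi> Qc (H1 \<times> H2)"
  proof (rule bij_betw_byWitness[where f' = \<psi>])
    show "\<forall>x\<in>Qc. \<psi> (\<phi> x) = x"
    proof
      fix x assume x: "x \<in> Qc"
      show "\<psi> (\<phi> x) = x"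
      proof (rule ext)
        fix i
        show "\<psi> (\<phi> x) i = x i"
        proof (cases "i \<in> F \<inter> G")
          case True then show ?thesis using x Qc unfolding \<psi>_def by simp
        next
          case nFG: False
          show ?thesis
          proof (cases "i \<in> F - G")
            case True
            then show ?thesis using nFG s2[OF True] s3[OF True] unfolding \<psi>_def \<phi>_def restr_def by simp
          next
            case nF: False
            show ?thesis
            proof (cases "i \<in> G - F")
              case True
              then show ?thesis using nFG nF t2[OF True] t3[OF True] unfolding \<psi>_def \<phi>_def restr_def by simp
            next
              case False
              then have "i \<notin> F \<union> G" using nFG nF by blast
              then have "x i = 0" using x Qc by (cases "i \<in> E") auto
              then show ?thesis using nFG nF False unfolding \<psi>_def by simp
            qed
          qed
        qed
      qed
    qed
    show "\<forall>p\<in>H1 \<times> H2. \<phi> (\<psi> p) = p"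
    proof
      fix p assume p: "p \<in> H1 \<times> H2"
      have "restr {1..al} (\<psi> p \<circ> \<sigma>) = fst p"
      proof (rule ext)
        fix j show "restr {1..al} (\<psi> p \<circ> \<sigma>) j = fst p j"
        proof (cases "j \<in> {1..al}")
          case True
          then show ?thesis using s1[OF True] s4[OF True] unfolding restr_def \<psi>_def by auto
        next
          case False
          then show ?thesis using p H1m unfolding restr_def by auto
        qed
      qed
      moreover have "restr {1..be} (\<psi> p \<circ> \<tau>) = snd p"
      proof (rule ext)
        fix j show "restr {1..be} (\<psi> p \<circ> \<tau>) j = snd p j"
        proof (cases "j \<in> {1..be}")
          case True
          then show ?thesis using t1[OF True] t4[OF True] unfolding restr_def \<psi>_def by auto
        next
          case False
          then show ?thesis using p H2m unfolding restr_def by auto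
        qed
      qed
      ultimately show "\<phi> (\<psi> p) = p" unfolding \<phi>_def by simp
    qed
    show "\<phi> ` Qc \<subseteq> H1 \<times> H2"
    proof
      fix q assume "q \<in> \<phi> ` Qc"
      then obtain x where x: "x \<in> Qc" and q: "q = \<phi> x" by blast
      have xb: "\<forall>i\<in>E. 0 \<le> x i \<and> x i \<le> 1" using x Qc by blast
      have "(\<Sum>j\<in>{1..al}. restr {1..al} (x \<circ> \<sigma>) j) = (\<Sum>j\<in>{1..al}. x (\<sigma> j))"
        unfolding restr_def by (rule sum.cong) auto
      also have "\<dots> = (\<Sum>i\<in>F - G. x i)" using sum.reindex_bij_betw[OF \<sigma>] .
      also have "\<dots> = real r - real g" using x Qc by blast
      finally have sm1: "(\<Sum>j\<in>{1..al}. restr {1..al} (x \<circ> \<sigma>) j) = real r - real g" .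
      have "(\<Sum>j\<in>{1..be}. restr {1..be} (x \<circ> \<tau>) j) = (\<Sum>j\<in>{1..be}. x (\<tau> j))"
        unfolding restr_def by (rule sum.cong) auto
      also have "\<dots> = (\<Sum>i\<in>G - F. x i)" using sum.reindex_bij_betw[OF \<tau>] .
      also have "\<dots> = real s - real g" using x Qc by blast
      finally have sm2: "(\<Sum>j\<in>{1..be}. restr {1..be} (x \<circ> \<tau>) j) = real s - real g" .
      have sE: "\<And>j. j \<in> {1..al} \<Longrightarrow> 0 \<le> x (\<sigma> j) \<and> x (\<sigma> j) \<le> 1"
        using s1 xb FE by blast
      have tE: "\<And>j. j \<in> {1..be} \<Longrightarrow> 0 \<le> x (\<tau> j) \<and> x (\<tau> j) \<le> 1"
        using t1 xb GE by blast
      have "restr {1..al} (x \<circ> \<sigma>) \<in> H1" unfolding H1m using sm1 sE by (auto simp: restr_def)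
      moreover have "restr {1..be} (x \<circ> \<tau>) \<in> H2" unfolding H2m using sm2 tE by (auto simp: restr_def)
      ultimately show "q \<in> H1 \<times> H2" unfolding q \<phi>_def by simp
    qed
    show "\<psi> ` (H1 \<times> H2) \<subseteq> Qc"
    proof
      fix x assume "x \<in> \<psi> ` (H1 \<times> H2)"
      then obtain p where p: "p \<in> H1 \<times> H2" and xp: "x = \<psi> p" by blast
      have p1: "fst p \<in> H1" and p2: "snd p \<in> H2" using p by auto
      have out: "\<forall>i. i \<notin> E \<longrightarrow> x i = 0" unfolding xp \<psi>_def using FE GE by auto
      have box: "\<forall>i\<in>E. 0 \<le> x i \<and> x i \<le> 1"
      proof
        fix i assume "i \<in> E"
        show "0 \<le> x i \<and> x i \<le> 1"
        proof (cases "i \<in> F - G")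
          case True
          then show ?thesis using s2[OF True] p1 H1m unfolding xp \<psi>_def by auto
        next
          case nF: False
          show ?thesis
          proof (cases "i \<in> G - F")
            case True
            then show ?thesis using t2[OF True] p2 H2m nF unfolding xp \<psi>_def by auto
          next
            case False
            then show ?thesis using nF unfolding xp \<psi>_def by auto
          qed
        qed
      qed
      have one: "\<forall>i\<in>F \<inter> G. x i = 1" unfolding xp \<psi>_def by simp
      have zero: "\<forall>i\<in>E - (F \<union> G). x i = 0" unfolding xp \<psi>_def by simp
      have "(\<Sum>i\<in>F - G. x i) = (\<Sum>i\<in>F - G. fst p (\<sigma>' i))"
        unfolding xp \<psi>_def by (rule sum.cong) auto
      also have "\<dots> = (\<Sum>j\<in>{1..al}. fst p j)" using sum.reindex_bij_betw[OF \<sigma>'b] .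
      also have "\<dots> = real r - real g" using p1 H1m by blast
      finally have sF: "(\<Sum>i\<in>F - G. x i) = real r - real g" .
      have "(\<Sum>i\<in>G - F. x i) = (\<Sum>i\<in>G - F. snd p (\<tau>' i))"
        unfolding xp \<psi>_def by (rule sum.cong) auto
      also have "\<dots> = (\<Sum>j\<in>{1..be}. snd p j)" using sum.reindex_bij_betw[OF \<tau>'b] .
      also have "\<dots> = real s - real g" using p2 H2m by blast
      finally have sG: "(\<Sum>i\<in>G - F. x i) = real s - real g" .
      show "x \<in> Qc" unfolding Qc using out box one zero sF sG by blast
    qed
  qed
  then show ?thesis using \<sigma> \<tau> unfolding \<phi>_def H1_def H2_def by blast
qed

lemma poly_part:
  fixes F G E :: "'a set" and k r s :: nat
  assumes fin: "finite E" and FE: "F \<subseteq> E" and GE: "G \<subseteq> E"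
    and ineq: "k + card (F \<inter> G) \<le> r + s"
    and Qd: "Q = hypersimplex (int k) E \<inter> Hge F (real r) \<inter> Hge G (real s)"
    and al: "al = card (F - G)" and be: "be = card (G - F)" and ga: "g = card (F \<inter> G)"
  shows "(r + s = k + g \<longrightarrow>
            Q = simplex_product
                  [(int g, F \<inter> G), (int r - int g, F - G), (int s - int g, G - F),
                   (0, E - (F \<union> G))]
          \<and> (\<exists>\<sigma> \<tau>. bij_betw \<sigma> {1..al} (F - G) \<and> bij_betw \<tau> {1..be} (G - F) \<and>
                bij_betw (\<lambda>x. (restr {1..al} (x \<circ> \<sigma>), restr {1..be} (x \<circ> \<tau>))) Q
                  (hypersimplex (int r - int g) {1..al} \<times> hypersimplex (int s - int g) {1..be}))
          \<and> Q = hypersimplex (int k) E \<inter> Heq F (real r) \<inter> Heq G (real s))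
       \<and> (r + s \<noteq> k + g \<longrightarrow> Q = {})"
proof -
  have fF: "finite F" and fG: "finite G" using fin FE GE finite_subset by blast+
  have fFG: "finite (F \<inter> G)" "finite (F - G)" "finite (G - F)" "finite (E - (F \<union> G))"
    using fF fG fin by auto
  note S4 = sums4[OF fin FE GE]
  have Qmem: "\<And>x. x \<in> Q \<longleftrightarrow> (\<forall>i. i \<notin> E \<longrightarrow> x i = 0) \<and> (\<forall>i\<in>E. 0 \<le> x i \<and> x i \<le> 1)
      \<and> (\<Sum>i\<in>E. x i) = real k \<and> real r \<le> (\<Sum>i\<in>F. x i) \<and> real s \<le> (\<Sum>i\<in>G. x i)"
    unfolding Qd hyp_char[OF fin] Hge_def by simp
  have bnd: "\<And>x. \<forall>i\<in>E. 0 \<le> x i \<and> x i \<le> 1 \<Longrightarrow>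
      (\<Sum>i\<in>F \<inter> G. x i) \<le> real g \<and> 0 \<le> (\<Sum>i\<in>E - (F \<union> G). x i)
      \<and> 0 \<le> (\<Sum>i\<in>F - G. x i) \<and> 0 \<le> (\<Sum>i\<in>G - F. x i)"
  proof -
    fix x :: "'a \<Rightarrow> real" assume b: "\<forall>i\<in>E. 0 \<le> x i \<and> x i \<le> 1"
    have "\<forall>i\<in>F \<inter> G. x i \<le> 1" using b FE by blast
    then have "(\<Sum>i\<in>F \<inter> G. x i) \<le> real g" using sum_le_card ga by metis
    moreover have "0 \<le> (\<Sum>i\<in>E - (F \<union> G). x i)" using b by (intro sum_nonneg) auto
    moreover have "0 \<le> (\<Sum>i\<in>F - G. x i)" using b FE by (intro sum_nonneg) auto
    moreover have "0 \<le> (\<Sum>i\<in>G - F. x i)" using b GE by (intro sum_nonneg) auto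
    ultimately show "(\<Sum>i\<in>F \<inter> G. x i) \<le> real g \<and> 0 \<le> (\<Sum>i\<in>E - (F \<union> G). x i)
      \<and> 0 \<le> (\<Sum>i\<in>F - G. x i) \<and> 0 \<le> (\<Sum>i\<in>G - F. x i)" by blast
  qed
  have nonmod: "r + s \<noteq> k + g \<longrightarrow> Q = {}"
  proof (intro impI)
    assume ne: "r + s \<noteq> k + g"
    then have lt: "real k + real g < real r + real s" using ineq ga by linarith
    show "Q = {}"
    proof (rule ccontr)
      assume "Q \<noteq> {}"
      then obtain x where x: "x \<in> Q" by blast
      then have xx: "(\<forall>i\<in>E. 0 \<le> x i \<and> x i \<le> 1)" "(\<Sum>i\<in>E. x i) = real k" "real r \<le> (\<Sum>i\<in>F. x i)"
        "real s \<le> (\<Sum>i\<in>G. x i)" using Qmem by blast+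
      note b = bnd[OF xx(1)]
      show False using xx(2-4) b S4[of x] lt by linarith
    qed
  qed
  have modpart: "r + s = k + g \<longrightarrow>
            Q = simplex_product
                  [(int g, F \<inter> G), (int r - int g, F - G), (int s - int g, G - F),
                   (0, E - (F \<union> G))]
          \<and> (\<exists>\<sigma> \<tau>. bij_betw \<sigma> {1..al} (F - G) \<and> bij_betw \<tau> {1..be} (G - F) \<and>
                bij_betw (\<lambda>x. (restr {1..al} (x \<circ> \<sigma>), restr {1..be} (x \<circ> \<tau>))) Q
                  (hypersimplex (int r - int g) {1..al} \<times> hypersimplex (int s - int g) {1..be}))
          \<and> Q = hypersimplex (int k) E \<inter> Heq F (real r) \<inter> Heq G (real s)"
  proof (intro impI)
    assume eq: "r + s = k + g"
    then have req: "real r + real s = real k + real g" by (metis of_nat_add)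
    define Qc where "Qc = {x. (\<forall>i. i \<notin> E \<longrightarrow> x i = 0) \<and> (\<forall>i\<in>E. 0 \<le> x i \<and> x i \<le> 1) \<and> (\<forall>i\<in>F \<inter> G. x i = 1)
        \<and> (\<forall>i\<in>E - (F \<union> G). x i = 0) \<and> (\<Sum>i\<in>F - G. x i) = real r - real g \<and> (\<Sum>i\<in>G - F. x i) = real s - real g}"
    have QcS: "\<And>x. x \<in> Qc \<Longrightarrow> (\<Sum>i\<in>E. x i) = real k \<and> (\<Sum>i\<in>F. x i) = real r \<and> (\<Sum>i\<in>G. x i) = real s"
    proof -
      fix x assume x: "x \<in> Qc"
      have "(\<Sum>i\<in>F \<inter> G. x i) = (\<Sum>i\<in>F \<inter> G. 1)" using x unfolding Qc_def by (intro sum.cong) auto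
      then have a: "(\<Sum>i\<in>F \<inter> G. x i) = real g" using ga by simp
      have d: "(\<Sum>i\<in>E - (F \<union> G). x i) = 0" using x unfolding Qc_def by (intro sum.neutral) auto
      have bc: "(\<Sum>i\<in>F - G. x i) = real r - real g" "(\<Sum>i\<in>G - F. x i) = real s - real g"
        using x unfolding Qc_def by blast+
      show "(\<Sum>i\<in>E. x i) = real k \<and> (\<Sum>i\<in>F. x i) = real r \<and> (\<Sum>i\<in>G. x i) = real s"
        using S4[of x] a d bc req by linarith
    qed
    have QQc: "Q = Qc"
    proof (intro set_eqI iffI)
      fix x assume x: "x \<in> Q"
      then have xx: "\<forall>i. i \<notin> E \<longrightarrow> x i = 0" "(\<forall>i\<in>E. 0 \<le> x i \<and> x i \<le> 1)" "(\<Sum>i\<in>E. x i) = real k" "real r \<le> (\<Sum>i\<in>F. x i)"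
        "real s \<le> (\<Sum>i\<in>G. x i)" using Qmem by blast+
      note b = bnd[OF xx(2)]
      have a: "(\<Sum>i\<in>F \<inter> G. x i) = real g" and d: "(\<Sum>i\<in>E - (F \<union> G). x i) = 0"
        and bb: "(\<Sum>i\<in>F - G. x i) = real r - real g" and cc: "(\<Sum>i\<in>G - F. x i) = real s - real g"
        using xx(3-5) b S4[of x] req by linarith+
      have "\<forall>i\<in>F \<inter> G. x i = 1" using sum_all1[OF fFG(1), of x] xx(2) FE a ga by blast
      moreover have "\<forall>i\<in>E - (F \<union> G). x i = 0" using sum_all0[OF fFG(4), of x] xx(2) d by blast
      ultimately show "x \<in> Qc" unfolding Qc_def using xx(1,2) bb cc by blast
    next
      fix x assume x: "x \<in> Qc"
      then have "\<forall>i. i \<notin> E \<longrightarrow> x i = 0" "(\<forall>i\<in>E. 0 \<le> x i \<and> x i \<le> 1)" unfolding Qc_def by blast+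
      then show "x \<in> Q" unfolding Qmem using QcS[OF x] by simp
    qed
    have heq: "Q = hypersimplex (int k) E \<inter> Heq F (real r) \<inter> Heq G (real s)"
    proof (intro set_eqI iffI)
      fix x assume x: "x \<in> Q"
      then have "x \<in> Qc" using QQc by simp
      note qs = QcS[OF this]
      have "x \<in> hypersimplex (int k) E" using x unfolding Qd by blast
      then show "x \<in> hypersimplex (int k) E \<inter> Heq F (real r) \<inter> Heq G (real s)"
        unfolding Heq_def Hge_def Hle_def using qs by simp
    next
      fix x assume "x \<in> hypersimplex (int k) E \<inter> Heq F (real r) \<inter> Heq G (real s)"
      then show "x \<in> Q" unfolding Qd Heq_def by blast
    qed
    define P where "P = simplex_product [(int g, F \<inter> G), (int r - int g, F - G), (int s - int g, G - F), (0, E - (F \<union> G))]"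
    have U: "(F \<inter> G) \<union> ((F - G) \<union> ((G - F) \<union> (E - (F \<union> G)))) = E" using FE GE by auto
    have Pmem: "\<And>x. x \<in> P \<longleftrightarrow> (\<forall>i. i \<notin> E \<longrightarrow> x i = 0)
       \<and> ((\<forall>i\<in>F \<inter> G. 0 \<le> x i \<and> x i \<le> 1) \<and> (\<Sum>i\<in>F \<inter> G. x i) = real g)
       \<and> ((\<forall>i\<in>F - G. 0 \<le> x i \<and> x i \<le> 1) \<and> (\<Sum>i\<in>F - G. x i) = real r - real g)
       \<and> ((\<forall>i\<in>G - F. 0 \<le> x i \<and> x i \<le> 1) \<and> (\<Sum>i\<in>G - F. x i) = real s - real g)
       \<and> ((\<forall>i\<in>E - (F \<union> G). 0 \<le> x i \<and> x i \<le> 1) \<and> (\<Sum>i\<in>E - (F \<union> G). x i) = 0)"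
    proof -
      fix x :: "'a \<Rightarrow> real"
      have "x \<in> P \<longleftrightarrow> (\<forall>i. i \<notin> (F \<inter> G) \<union> ((F - G) \<union> ((G - F) \<union> (E - (F \<union> G)))) \<longrightarrow> x i = 0)
        \<and> restr (F \<inter> G) x \<in> hypersimplex (int g) (F \<inter> G)
        \<and> restr (F - G) x \<in> hypersimplex (int r - int g) (F - G)
        \<and> restr (G - F) x \<in> hypersimplex (int s - int g) (G - F)
        \<and> restr (E - (F \<union> G)) x \<in> hypersimplex 0 (E - (F \<union> G))"
        unfolding P_def simplex_product_def by simp
      then show "?thesis x" unfolding U
        by (simp only: restr_hyp[OF fFG(1)] restr_hyp[OF fFG(2)] restr_hyp[OF fFG(3)] restr_hyp[OF fFG(4)]) simp
    qed
    have PQc: "P = Qc"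
    proof (intro set_eqI iffI)
      fix x assume "x \<in> P"
      note px = this[unfolded Pmem]
      have box: "\<forall>i\<in>E. 0 \<le> x i \<and> x i \<le> 1"
      proof
        fix i assume "i \<in> E"
        then have "i \<in> F \<inter> G \<or> i \<in> F - G \<or> i \<in> G - F \<or> i \<in> E - (F \<union> G)" by blast
        then show "0 \<le> x i \<and> x i \<le> 1" using px by blast
      qed
      have "\<forall>i\<in>F \<inter> G. x i = 1" using sum_all1[OF fFG(1), of x] px ga by blast
      moreover have "\<forall>i\<in>E - (F \<union> G). x i = 0" using sum_all0[OF fFG(4), of x] px by blast
      ultimately show "x \<in> Qc" unfolding Qc_def using px box by blast
    next
      fix x assume x: "x \<in> Qc"
      have xx: "\<forall>i. i \<notin> E \<longrightarrow> x i = 0" "(\<forall>i\<in>E. 0 \<le> x i \<and> x i \<le> 1)" "\<forall>i\<in>F \<inter> G. x i = 1"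
        "\<forall>i\<in>E - (F \<union> G). x i = 0" "(\<Sum>i\<in>F - G. x i) = real r - real g" "(\<Sum>i\<in>G - F. x i) = real s - real g"
        using x unfolding Qc_def by blast+
      have "(\<Sum>i\<in>F \<inter> G. x i) = (\<Sum>i\<in>F \<inter> G. 1)" using xx(3) by (intro sum.cong) auto
      then have a: "(\<Sum>i\<in>F \<inter> G. x i) = real g" using ga by simp
      have d: "(\<Sum>i\<in>E - (F \<union> G). x i) = 0" using xx(4) by (intro sum.neutral) auto
      have b1: "\<forall>i\<in>F \<inter> G. 0 \<le> x i \<and> x i \<le> 1" "\<forall>i\<in>F - G. 0 \<le> x i \<and> x i \<le> 1"
        "\<forall>i\<in>G - F. 0 \<le> x i \<and> x i \<le> 1" "\<forall>i\<in>E - (F \<union> G). 0 \<le> x i \<and> x i \<le> 1"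
        using xx(2) FE GE by blast+
      show "x \<in> P" unfolding Pmem using xx(1,5,6) a d b1 by blast
    qed
    have bij: "\<exists>\<sigma> \<tau>. bij_betw \<sigma> {1..al} (F - G) \<and> bij_betw \<tau> {1..be} (G - F) \<and>
                bij_betw (\<lambda>x. (restr {1..al} (x \<circ> \<sigma>), restr {1..be} (x \<circ> \<tau>))) Qc
                  (hypersimplex (int r - int g) {1..al} \<times> hypersimplex (int s - int g) {1..be})"
      using bij_part[OF fin FE GE Qc_def al be] .
    show "Q = simplex_product
                  [(int g, F \<inter> G), (int r - int g, F - G), (int s - int g, G - F),
                   (0, E - (F \<union> G))]
          \<and> (\<exists>\<sigma> \<tau>. bij_betw \<sigma> {1..al} (F - G) \<and> bij_betw \<tau> {1..be} (G - F) \<and>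
                bij_betw (\<lambda>x. (restr {1..al} (x \<circ> \<sigma>), restr {1..be} (x \<circ> \<tau>))) Q
                  (hypersimplex (int r - int g) {1..al} \<times> hypersimplex (int s - int g) {1..be}))
          \<and> Q = hypersimplex (int k) E \<inter> Heq F (real r) \<inter> Heq G (real s)"
      using QQc PQc bij heq unfolding P_def by simp
  qed
  show ?thesis using nonmod modpart by blast
qed

theorem mainTheorem3:
  fixes n k r s :: nat and \<B> :: "nat set set" and F G :: "nat set"
  assumes split: "split_matroid {1..n} \<B>"
    and rank: "k = rk \<B> {1..n}"
    and F: "proper_cyclic_flat {1..n} \<B> F" and G: "proper_cyclic_flat {1..n} \<B> G"
    and FG: "F \<noteq> G"
    and r: "r = rk \<B> F" and s: "s = rk \<B> G"
  defines "Q \<equiv> hypersimplex (int k) {1..n} \<inter> Hge F (real r) \<inter> Hge G (real s)"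
    and "\<alpha> \<equiv> card (F - G)" and "\<beta> \<equiv> card (G - F)" and "\<gamma> \<equiv> card (F \<inter> G)"
  shows "(modular_pair \<B> F G \<longrightarrow>
            Q = simplex_product
                  [(int \<gamma>, F \<inter> G), (int r - int \<gamma>, F - G), (int s - int \<gamma>, G - F),
                   (0, {1..n} - (F \<union> G))]
          \<and> (\<exists>\<sigma> \<tau>. bij_betw \<sigma> {1..\<alpha>} (F - G) \<and> bij_betw \<tau> {1..\<beta>} (G - F) \<and>
                bij_betw (\<lambda>x. (restr {1..\<alpha>} (x \<circ> \<sigma>), restr {1..\<beta>} (x \<circ> \<tau>))) Q
                  (hypersimplex (int r - int \<gamma>) {1..\<alpha>} \<times> hypersimplex (int s - int \<gamma>) {1..\<beta>}))
          \<and> Q = hypersimplex (int k) {1..n} \<inter> Heq F (real r) \<inter> Heq G (real s))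
       \<and> (\<not> modular_pair \<B> F G \<longrightarrow> Q = {})"
proof -
  have fin: "finite {1..n}" by simp
  note bF = pcf_basic[OF split F] and bG = pcf_basic[OF split G]
  note comb = main_comb[OF split F G FG]
  have MM: "matroid {1..n} \<B>" using M[OF split] .
  have sm: "rk \<B> (F \<union> G) + rk \<B> (F \<inter> G) \<le> rk \<B> F + rk \<B> G" using submod[OF MM] .
  have ineq: "k + card (F \<inter> G) \<le> r + s" using comb sm rank r s by simp
  have modiff: "modular_pair \<B> F G \<longleftrightarrow> r + s = k + \<gamma>"
    unfolding modular_pair_def using comb rank r s \<gamma>_def by auto
  have pp: "(r + s = k + \<gamma> \<longrightarrow>
            Q = simplex_product
                  [(int \<gamma>, F \<inter> G), (int r - int \<gamma>, F - G), (int s - int \<gamma>, G - F),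
                   (0, {1..n} - (F \<union> G))]
          \<and> (\<exists>\<sigma> \<tau>. bij_betw \<sigma> {1..\<alpha>} (F - G) \<and> bij_betw \<tau> {1..\<beta>} (G - F) \<and>
                bij_betw (\<lambda>x. (restr {1..\<alpha>} (x \<circ> \<sigma>), restr {1..\<beta>} (x \<circ> \<tau>))) Q
                  (hypersimplex (int r - int \<gamma>) {1..\<alpha>} \<times> hypersimplex (int s - int \<gamma>) {1..\<beta>}))
          \<and> Q = hypersimplex (int k) {1..n} \<inter> Heq F (real r) \<inter> Heq G (real s))
       \<and> (r + s \<noteq> k + \<gamma> \<longrightarrow> Q = {})"
    by (rule poly_part[OF fin bF(1) bG(1) ineq Q_def[THEN meta_eq_to_obj_eq] \<alpha>_def[THEN meta_eq_to_obj_eq]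
        \<beta>_def[THEN meta_eq_to_obj_eq] \<gamma>_def[THEN meta_eq_to_obj_eq]])
  show ?thesis unfolding modiff by (rule pp)
qed

end
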